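(* Let $q\in(0,1/2]$, $k>0$, $D>0$, and let $(\bar u,\bar z)$ be a weak-detonation profile as described in the context, with $0\le u_+<u_{\mathrm{ig}}<u_-<1$, so that $\bar u$ is non-increasing (Proposition 2.3) and $0\le \bar u\le 1$, $0\le\bar z\le1$. Define \[ L:=\sup_{x\in\mathbb{R}}\varphi'(\bar u(x))\bar z(x),\qquad M:=\sup_{x\in\mathbb{R}}\Big((1+q)\varphi'(\bar u(x))\bar z(x)-\varphi(\bar u(x))\Big), \] and assume $L>0$. Suppose $\lambda\in\mathbb{C}$ with $\operatorname{Re}\lambda\ge0$ is an eigenvalue of the integrated eigenvalue problem \begin{align*} \lambda w-(1-\bar u)w'&=q\bar u\,z+q(D-1)z'+w'',\\ \lambda z+k\big(\varphi(\bar u)-q\varphi'(\bar u)\bar z\big)z&=z'+k\varphi'(\bar u)\bar z\,w'+Dz'', \end{align*} i.e. there is a nontrivial solution $(w,z)\in H^2(\mathbb{R})\times H^2(\mathbb{R})$. Then \[ \operatorname{Re}\lambda+|\operatorname{Im}\lambda|\le\max\Big\{3,\ \frac{1}{4D}+\Big(\frac14+\frac12|D-1|^2\Big)kL+kM\Big\}. \]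
   Context: Setting: the rescaled Majda model $u_t-u_x+(u^2/2)_x=u_{xx}+qk\varphi(u)z$, $z_t-z_x=Dz_{xx}-k\varphi(u)z$, with ignition function $\varphi(u)=0$ for $u\le u_{\mathrm{ig}}$, $\varphi(u)=e^{-E_A/(u-u_{\mathrm{ig}})}$ for $u>u_{\mathrm{ig}}$ ($E_A>0$). A weak-detonation profile is a steady solution $(\bar u,\bar z)(x)$ of this system (speed normalized to $1$) with $(\bar u,\bar z)\to(u_-,0)$ as $x\to-\infty$ and $(\bar u,\bar z)\to(u_+,1)$ as $x\to+\infty$, where $\tfrac12(u_+^2-u_-^2)=u_+-u_-+q$ and $u_\pm<1$. Here $'$ denotes $\mathrm d/\mathrm dx$, and the equations in $(w,z)$ are the linearized eigenvalue equations written in the integrated variable $w$ with $w'=u+qz$ ($u,z$ the perturbations). *)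

theory Defs
  imports "HOL-Analysis.Analysis"
begin

definition ign :: "real \<Rightarrow> real \<Rightarrow> real \<Rightarrow> real" where
  "ign EA uig u = (if u \<le> uig then 0 else exp (- EA / (u - uig)))"

text \<open>Weak-detonation profile (steady solution with speed 1) connecting
  (u_-,0) at minus infinity to (u_+,1) at plus infinity.\<close>
definition weak_det_profile ::
  "real \<Rightarrow> real \<Rightarrow> real \<Rightarrow> real \<Rightarrow> real \<Rightarrow> real \<Rightarrow> real \<Rightarrow>
   (real \<Rightarrow> real) \<Rightarrow> (real \<Rightarrow> real) \<Rightarrow> bool" where
  "weak_det_profile q k D EA uig um up ub zb \<longleftrightarrow>
     (\<exists>ub1 ub2 zb1 zb2.
        (\<forall>x. (ub has_real_derivative ub1 x) (at x)) \<and>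
        (\<forall>x. (ub1 has_real_derivative ub2 x) (at x)) \<and>
        (\<forall>x. (zb has_real_derivative zb1 x) (at x)) \<and>
        (\<forall>x. (zb1 has_real_derivative zb2 x) (at x)) \<and>
        (\<forall>x. - ub1 x + ub x * ub1 x = ub2 x + q * k * ign EA uig (ub x) * zb x) \<and>
        (\<forall>x. - zb1 x = D * zb2 x - k * ign EA uig (ub x) * zb x) \<and>
        (ub \<longlongrightarrow> um) at_bot \<and> (zb \<longlongrightarrow> 0) at_bot \<and>
        (ub \<longlongrightarrow> up) at_top \<and> (zb \<longlongrightarrow> 1) at_top)"

definition H2_with :: "(real \<Rightarrow> complex) \<Rightarrow> (real \<Rightarrow> complex) \<Rightarrow> (real \<Rightarrow> complex) \<Rightarrow> bool" where
  "H2_with f f1 f2 \<longleftrightarrow>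
     (\<forall>x. (f has_vector_derivative f1 x) (at x)) \<and>
     (\<forall>x. (f1 has_vector_derivative f2 x) (at x)) \<and>
     integrable lborel (\<lambda>x. (cmod (f x))\<^sup>2) \<and>
     integrable lborel (\<lambda>x. (cmod (f1 x))\<^sup>2) \<and>
     integrable lborel (\<lambda>x. (cmod (f2 x))\<^sup>2)"

end

theory Submission
  imports Defs "HOL-Real_Asymp.Real_Asymp"
begin

lemma cont_meas: "continuous_on UNIV f \<Longrightarrow> f \<in> borel_measurable lborel"
  by (simp add: borel_measurable_continuous_onI)

lemma FTC_ind:
  fixes h p :: "real \<Rightarrow> complex"
  assumes "\<And>x. (h has_vector_derivative p x) (at x)" "\<And>x. isCont p x" "a \<le> b"
  shows "integral\<^sup>L lborel (\<lambda>x. indicator {a..b} x *\<^sub>R p x) = h b - h a"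
  apply (rule integral_FTC_atLeastAtMost[OF assms(3)])
  using assms(1) has_vector_derivative_at_within apply blast
  by (simp add: assms(2) continuous_at_imp_continuous_on)

lemma int_ind_cont:
  fixes p :: "real \<Rightarrow> 'a::{banach,second_countable_topology}"
  assumes "\<And>x. isCont p x"
  shows "integrable lborel (\<lambda>x. indicator {a..b} x *\<^sub>R p x)"
  using borel_integrable_atLeastAtMost'[of a b p] assms
  by (simp add: continuous_at_imp_continuous_on set_integrable_def)


lemma int_ind_norm:
  fixes p :: "real \<Rightarrow> 'a::{banach,second_countable_topology}"
  assumes "\<And>x. isCont p x"
  shows "integrable lborel (\<lambda>x. indicat_real {a..b} x * norm (p x))"
  using int_ind_cont[of "\<lambda>x. norm (p x)" a b] assms by simp

lemma bound_at:
  fixes h p :: "real \<Rightarrow> complex"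
  assumes der: "\<And>x. (h has_vector_derivative p x) (at x)" and cp: "\<And>x. isCont p x"
  shows "norm (h a) \<le> (LINT x|lborel. indicat_real {a..a+1} x * norm (h x))
            + (LINT x|lborel. indicat_real {a..a+1} x * norm (p x))"
proof -
  have ch: "\<And>x. isCont h x"
    using der has_vector_derivative_continuous by blast
  define P where "P = (LINT x|lborel. indicat_real {a..a+1} x * norm (p x))"
  have pt: "norm (h a) \<le> norm (h x) + P" if x: "x \<in> {a..a+1}" for x
  proof -
    have e: "h x - h a = integral\<^sup>L lborel (\<lambda>t. indicator {a..x} t *\<^sub>R p t)"
      using FTC_ind[OF der cp, of a x] x by simp
    have "norm (h x - h a) \<le> (LINT t|lborel. indicat_real {a..x} t * norm (p t))"
      unfolding e
      using integral_norm_bound[of lborel "\<lambda>t. indicator {a..x} t *\<^sub>R p t"]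
      by (simp add: abs_mult)
    also have "\<dots> \<le> P" unfolding P_def
      apply (rule integral_mono)
        apply (rule int_ind_norm[OF cp])
       apply (rule int_ind_norm[OF cp])
      using x by (auto simp: indicator_def)
    finally have "norm (h x - h a) \<le> P" .
    moreover have "norm (h a) \<le> norm (h x) + norm (h x - h a)"
      using norm_triangle_ineq2[of "h a" "h x"] norm_minus_commute[of "h a" "h x"] by simp
    ultimately show ?thesis by linarith
  qed
  have m1: "measure lborel {a..a+1} = 1" by simp
  have ii: "integrable lborel (\<lambda>x. indicat_real {a..a+1} x * c)" for c
    by (intro integrable_mult_left integrable_real_indicator) auto
  have "norm (h a) = (LINT x|lborel. indicat_real {a..a+1} x * norm (h a))"
    using m1 by simp
  also have "\<dots> \<le> (LINT x|lborel. indicat_real {a..a+1} x * norm (h x) + indicat_real {a..a+1} x * P)"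
    apply (rule integral_mono)
      apply (rule ii)
     apply (rule Bochner_Integration.integrable_add[OF int_ind_norm[OF ch] ii])
    by (auto simp: indicator_def pt)
  also have "\<dots> = (LINT x|lborel. indicat_real {a..a+1} x * norm (h x)) + P"
    using m1 by (subst Bochner_Integration.integral_add[OF int_ind_norm[OF ch] ii]) simp
  finally show ?thesis unfolding P_def .
qed


lemma tail_gen:
  fixes g :: "real \<Rightarrow> real" and a :: "nat \<Rightarrow> real"
  assumes g: "integrable lborel g" and a: "\<And>x. eventually (\<lambda>n. x \<notin> {a n..a n + 1}) sequentially"
  shows "(\<lambda>n. LINT x|lborel. indicat_real {a n..a n+1} x * g x) \<longlonglongrightarrow> 0"
proof -
  have gm: "g \<in> borel_measurable lborel" using g by auto
  have "(\<lambda>n. LINT x|lborel. indicat_real {a n..a n+1} x * g x) \<longlonglongrightarrow> (LINT (x::real)|lborel. (0::real))"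
  proof (rule integral_dominated_convergence[where w="\<lambda>x. \<bar>g x\<bar>"
      and s="\<lambda>n x. indicat_real {a n..a n+1} x * g x"])
    show "(\<lambda>x. 0::real) \<in> borel_measurable lborel" by simp
    show "(\<lambda>x. indicat_real {a i..a i + 1} x * g x) \<in> borel_measurable lborel" for i
      using gm by measurable
    show "integrable lborel (\<lambda>x. \<bar>g x\<bar>)" using g by auto
    show "AE x in lborel. (\<lambda>i. indicat_real {a i..a i + 1} x * g x) \<longlonglongrightarrow> 0"
    proof (rule AE_I2)
      fix x
      show "(\<lambda>i. indicat_real {a i..a i + 1} x * g x) \<longlonglongrightarrow> 0"
        using a[of x] by (rule tendsto_eventually[OF eventually_mono]) simp
    qed
    show "AE x in lborel. norm (indicat_real {a i..a i + 1} x * g x) \<le> \<bar>g x\<bar>" for i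
      by (rule AE_I2) (simp add: indicator_def)
  qed
  then show ?thesis by simp
qed

lemma tail_pos: "eventually (\<lambda>n. x \<notin> {real n..real n + 1}) sequentially"
proof -
  obtain N :: nat where "x < real N" using reals_Archimedean2 by blast
  then show ?thesis unfolding eventually_sequentially by (intro exI[of _ N]) auto
qed

lemma tail_neg: "eventually (\<lambda>n. x \<notin> {- real n..- real n + 1}) sequentially"
proof -
  obtain N :: nat where "1 - x < real N" using reals_Archimedean2 by blast
  then show ?thesis unfolding eventually_sequentially by (intro exI[of _ N]) auto
qed

lemma h_to_0:
  fixes h p :: "real \<Rightarrow> complex" and a :: "nat \<Rightarrow> real"
  assumes der: "\<And>x. (h has_vector_derivative p x) (at x)" and cp: "\<And>x. isCont p x"
    and ih: "integrable lborel (\<lambda>x. norm (h x))" and ip: "integrable lborel (\<lambda>x. norm (p x))"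
    and a: "\<And>x. eventually (\<lambda>n. x \<notin> {a n..a n + 1}) sequentially"
  shows "(\<lambda>n. h (a n)) \<longlonglongrightarrow> 0"
proof -
  have l: "(\<lambda>n. (LINT x|lborel. indicat_real {a n..a n+1} x * norm (h x))
            + (LINT x|lborel. indicat_real {a n..a n+1} x * norm (p x))) \<longlonglongrightarrow> 0 + 0"
    by (intro tendsto_add tail_gen ih ip a)
  have b: "\<forall>n. norm (h (a n)) \<le> (LINT x|lborel. indicat_real {a n..a n+1} x * norm (h x))
            + (LINT x|lborel. indicat_real {a n..a n+1} x * norm (p x))"
    using bound_at[OF der cp] by blast
  have "(\<lambda>n. h (a n)) \<longlonglongrightarrow> 0"
    using Lim_null_comparison[OF always_eventually[OF b]] l by simp
  then show ?thesis .
qed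


lemma ab_le: "(a::real) * b \<le> (a\<^sup>2 + b\<^sup>2) / 2"
  using sum_squares_bound[of a b] by (simp add: power2_eq_square)

lemma cnj_meas[measurable]: "f \<in> borel_measurable M \<Longrightarrow> (\<lambda>x. cnj (f x :: complex)) \<in> borel_measurable M"
proof -
  have "cnj \<in> borel_measurable borel"
    by (rule borel_measurable_continuous_onI) (intro continuous_intros)
  then show "f \<in> borel_measurable M \<Longrightarrow> (\<lambda>x. cnj (f x :: complex)) \<in> borel_measurable M"
    using measurable_compose by blast
qed

lemma L2prod:
  fixes f g :: "real \<Rightarrow> complex" and c :: "real \<Rightarrow> real"
  assumes fm: "f \<in> borel_measurable lborel" and gm: "g \<in> borel_measurable lborel"
    and cm: "c \<in> borel_measurable lborel" and cb: "\<And>x. \<bar>c x\<bar> \<le> C"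
    and fi: "integrable lborel (\<lambda>x. (cmod (f x))\<^sup>2)" and gi: "integrable lborel (\<lambda>x. (cmod (g x))\<^sup>2)"
  shows "integrable lborel (\<lambda>x. complex_of_real (c x) * f x * cnj (g x))"
proof (rule Bochner_Integration.integrable_bound)
  show "integrable lborel (\<lambda>x. C * ((cmod (f x))\<^sup>2 + (cmod (g x))\<^sup>2) / 2)"
    using fi gi by auto
  show "(\<lambda>x. complex_of_real (c x) * f x * cnj (g x)) \<in> borel_measurable lborel"
    using fm gm cm by measurable
  show "AE x in lborel. norm (complex_of_real (c x) * f x * cnj (g x))
      \<le> norm (C * ((cmod (f x))\<^sup>2 + (cmod (g x))\<^sup>2) / 2)"
  proof (rule AE_I2)
    fix x
    have C0: "0 \<le> C" using cb[of x] by linarith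
    have "norm (complex_of_real (c x) * f x * cnj (g x)) = \<bar>c x\<bar> * (cmod (f x) * cmod (g x))"
      by (simp add: norm_mult)
    also have "\<dots> \<le> C * ((cmod (f x))\<^sup>2 + (cmod (g x))\<^sup>2) / 2"
      using mult_mono[OF cb[of x] ab_le[of "cmod (f x)" "cmod (g x)"]] C0 by simp
    also have "\<dots> \<le> norm (C * ((cmod (f x))\<^sup>2 + (cmod (g x))\<^sup>2) / 2)" by simp
    finally show "norm (complex_of_real (c x) * f x * cnj (g x))
      \<le> norm (C * ((cmod (f x))\<^sup>2 + (cmod (g x))\<^sup>2) / 2)" .
  qed
qed

lemma L2prod1:
  fixes f g :: "real \<Rightarrow> complex"
  assumes fm: "f \<in> borel_measurable lborel" and gm: "g \<in> borel_measurable lborel"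
    and fi: "integrable lborel (\<lambda>x. (cmod (f x))\<^sup>2)" and gi: "integrable lborel (\<lambda>x. (cmod (g x))\<^sup>2)"
  shows "integrable lborel (\<lambda>x. f x * cnj (g x))"
  using L2prod[OF fm gm _ _ fi gi, of "\<lambda>x. 1" 1] by simp

lemma ibp0:
  fixes h p :: "real \<Rightarrow> complex"
  assumes der: "\<And>x. (h has_vector_derivative p x) (at x)" and cp: "\<And>x. isCont p x"
    and ih: "integrable lborel (\<lambda>x. norm (h x))" and ip: "integrable lborel p"
  shows "integral\<^sup>L lborel p = 0"
proof -
  have ipn: "integrable lborel (\<lambda>x. norm (p x))" using ip by auto
  have pm: "p \<in> borel_measurable lborel" using ip by auto
  have l1: "(\<lambda>n. integral\<^sup>L lborel (\<lambda>x. indicator {- real n..real n} x *\<^sub>R p x)) \<longlonglongrightarrow> integral\<^sup>L lborel p"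
  proof (rule integral_dominated_convergence[where w="\<lambda>x. norm (p x)"
      and s="\<lambda>n x. indicator {- real n..real n} x *\<^sub>R p x"])
    show "p \<in> borel_measurable lborel" by (rule pm)
    show "(\<lambda>x. indicat_real {- real i..real i} x *\<^sub>R p x) \<in> borel_measurable lborel" for i
      using pm by measurable
    show "integrable lborel (\<lambda>x. norm (p x))" by (rule ipn)
    show "AE x in lborel. (\<lambda>i. indicat_real {- real i..real i} x *\<^sub>R p x) \<longlonglongrightarrow> p x"
    proof (rule AE_I2)
      fix x
      obtain N :: nat where N: "\<bar>x\<bar> < real N" using reals_Archimedean2 by blast
      have "eventually (\<lambda>i. indicat_real {- real i..real i} x *\<^sub>R p x = p x) sequentially"
        unfolding eventually_sequentially
        by (rule exI[of _ N]) (use N in \<open>auto simp: indicator_def\<close>)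
      then show "(\<lambda>i. indicat_real {- real i..real i} x *\<^sub>R p x) \<longlonglongrightarrow> p x"
        by (rule tendsto_eventually)
    qed
    show "AE x in lborel. norm (indicat_real {- real i..real i} x *\<^sub>R p x) \<le> norm (p x)" for i
      by (rule AE_I2) (simp add: indicator_def)
  qed
  have e: "integral\<^sup>L lborel (\<lambda>x. indicator {- real n..real n} x *\<^sub>R p x) = h (real n) - h (- real n)" for n
    by (rule FTC_ind[OF der cp]) simp
  have l2: "(\<lambda>n. h (real n) - h (- real n)) \<longlonglongrightarrow> 0 - 0"
    by (intro tendsto_diff h_to_0[OF der cp ih ipn] tail_pos tail_neg)
  from l1 l2 show ?thesis unfolding e by (simp add: LIMSEQ_unique)
qed

lemma cont_of_der:
  fixes f :: "real \<Rightarrow> complex"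
  assumes "\<And>x. (f has_vector_derivative f1 x) (at x)"
  shows "continuous_on UNIV f" "\<And>x. isCont f x" "f \<in> borel_measurable lborel"
proof -
  show c: "\<And>x. isCont f x" using assms has_vector_derivative_continuous by blast
  then show "continuous_on UNIV f" by (simp add: continuous_at_imp_continuous_on)
  then show "f \<in> borel_measurable lborel" by (rule cont_meas)
qed

lemma ibp:
  fixes f f1 g g1 :: "real \<Rightarrow> complex"
  assumes df: "\<And>x. (f has_vector_derivative f1 x) (at x)" and dg: "\<And>x. (g has_vector_derivative g1 x) (at x)"
    and cf1: "\<And>x. isCont f1 x" and cg1: "\<And>x. isCont g1 x"
    and i1: "integrable lborel (\<lambda>x. (cmod (f x))\<^sup>2)" and i2: "integrable lborel (\<lambda>x. (cmod (f1 x))\<^sup>2)"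
    and i3: "integrable lborel (\<lambda>x. (cmod (g x))\<^sup>2)" and i4: "integrable lborel (\<lambda>x. (cmod (g1 x))\<^sup>2)"
  shows "integrable lborel (\<lambda>x. f1 x * cnj (g x))" "integrable lborel (\<lambda>x. f x * cnj (g1 x))"
    "integral\<^sup>L lborel (\<lambda>x. f1 x * cnj (g x)) = - integral\<^sup>L lborel (\<lambda>x. f x * cnj (g1 x))"
proof -
  have fm: "f \<in> borel_measurable lborel" and gm: "g \<in> borel_measurable lborel"
    using cont_of_der df dg by auto
  have f1m: "f1 \<in> borel_measurable lborel"
    by (rule cont_meas, rule continuous_at_imp_continuous_on) (use cf1 in auto)
  have g1m: "g1 \<in> borel_measurable lborel"
    by (rule cont_meas, rule continuous_at_imp_continuous_on) (use cg1 in auto)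
  show a: "integrable lborel (\<lambda>x. f1 x * cnj (g x))" by (rule L2prod1[OF f1m gm i2 i3])
  show b: "integrable lborel (\<lambda>x. f x * cnj (g1 x))" by (rule L2prod1[OF fm g1m i1 i4])
  have c: "integrable lborel (\<lambda>x. f x * cnj (g x))" by (rule L2prod1[OF fm gm i1 i3])
  have der: "((\<lambda>x. f x * cnj (g x)) has_vector_derivative (f x * cnj (g1 x) + f1 x * cnj (g x))) (at x)" for x
    by (intro derivative_intros df dg)
  have cp: "isCont (\<lambda>x. f x * cnj (g1 x) + f1 x * cnj (g x)) x" for x
    using cont_of_der(2)[OF df] cont_of_der(2)[OF dg] cf1 cg1 by (intro continuous_intros) auto
  have "integral\<^sup>L lborel (\<lambda>x. f x * cnj (g1 x) + f1 x * cnj (g x)) = 0"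
    by (rule ibp0[OF der cp]) (use a b c in auto)
  then show "integral\<^sup>L lborel (\<lambda>x. f1 x * cnj (g x)) = - integral\<^sup>L lborel (\<lambda>x. f x * cnj (g1 x))"
    using a b by (simp add: Bochner_Integration.integral_add add_eq_0_iff)
qed


lemma int_zero_cont:
  fixes g :: "real \<Rightarrow> real"
  assumes gi: "integrable lborel g" and gc: "\<And>x. isCont g x" and g0: "\<And>x. 0 \<le> g x"
    and z: "integral\<^sup>L lborel g \<le> 0"
  shows "g x0 = 0"
proof (rule ccontr)
  assume "g x0 \<noteq> 0"
  then have pos: "g x0 > 0" using g0[of x0] by linarith
  obtain d where d: "d > 0" "\<And>y. dist y x0 < d \<Longrightarrow> dist (g y) (g x0) < g x0 / 2"
    using gc[of x0] pos unfolding continuous_at_eps_delta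
    by (metis half_gt_zero)
  have ii: "integrable lborel (\<lambda>x. indicat_real {x0 - d/2..x0 + d/2} x * (g x0 / 2))"
    using d(1) by (intro integrable_mult_left integrable_real_indicator) (auto simp: emeasure_lborel_Icc_eq)
  have "(LINT x|lborel. indicat_real {x0 - d/2..x0 + d/2} x * (g x0 / 2)) \<le> integral\<^sup>L lborel g"
  proof (rule integral_mono[OF ii gi])
    fix y
    show "indicat_real {x0 - d/2..x0 + d/2} y * (g x0 / 2) \<le> g y"
    proof (cases "y \<in> {x0 - d/2..x0 + d/2}")
      case True
      then have "dist y x0 < d" using d(1) by (auto simp: dist_real_def)
      then have "\<bar>g y - g x0\<bar> < g x0 / 2" using d(2) by (simp add: dist_real_def)
      then have "- (g x0 / 2) < g y - g x0" unfolding abs_less_iff by linarith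
      then have "g x0 \<le> g y * 2" by linarith
      then show ?thesis using True by simp
    qed (simp add: g0)
  qed
  moreover have "(LINT x|lborel. indicat_real {x0 - d/2..x0 + d/2} x * (g x0 / 2)) = d * (g x0 / 2)"
    using d(1) by simp
  moreover have "d * (g x0 / 2) > 0" using d(1) pos by simp
  ultimately show False using z by linarith
qed


definition dign :: "real \<Rightarrow> real \<Rightarrow> real \<Rightarrow> real" where
  "dign EA uig u = (if u \<le> uig then 0 else EA / (u - uig)\<^sup>2 * exp (- EA / (u - uig)))"

lemma lim0: assumes "EA > 0" shows "((\<lambda>t::real. exp (- EA / t) / t) \<longlongrightarrow> 0) (at_right 0)"
  using assms by real_asymp

lemma ign_deriv:
  assumes EA: "EA > 0"
  shows "(ign EA uig has_real_derivative dign EA uig u) (at u)"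
proof (cases "u < uig")
  case True
  have d0: "dign EA uig u = 0" using True by (simp add: dign_def)
  have "((\<lambda>v. 0::real) has_real_derivative 0) (at u)" by simp
  then have "(ign EA uig has_real_derivative 0) (at u)"
    using has_field_derivative_transform_within_open[of "\<lambda>v. 0" 0 u "{..<uig}" "ign EA uig"] True
    by (auto simp: ign_def)
  then show ?thesis using d0 by simp
next
  case False
  show ?thesis
  proof (cases "u > uig")
    case True
    have "((\<lambda>v. exp (- EA / (v - uig))) has_real_derivative
         exp (- EA / (u - uig)) * (EA / (u - uig)\<^sup>2)) (at u)"
      using True by (auto intro!: derivative_eq_intros simp: power2_eq_square field_simps)
    then have "(ign EA uig has_real_derivative exp (- EA / (u - uig)) * (EA / (u - uig)\<^sup>2)) (at u)"
      using has_field_derivative_transform_within_open[of "\<lambda>v. exp (- EA / (v - uig))" _ u "{uig<..}" "ign EA uig"] True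
      by (auto simp: ign_def)
    moreover have "dign EA uig u = exp (- EA / (u - uig)) * (EA / (u - uig)\<^sup>2)"
      using True by (simp add: dign_def)
    ultimately show ?thesis by simp
  next
    case False
    then have u: "u = uig" using \<open>\<not> u < uig\<close> by simp
    have "((\<lambda>y. (ign EA uig y - ign EA uig u) / (y - u)) \<longlongrightarrow> 0) (at u)"
    proof (rule filterlim_split_at)
      show "((\<lambda>y. (ign EA uig y - ign EA uig u) / (y - u)) \<longlongrightarrow> 0) (at_left u)"
      proof (rule tendsto_eventually)
        show "\<forall>\<^sub>F x in at_left u. (ign EA uig x - ign EA uig u) / (x - u) = 0"
          unfolding eventually_at_left_field
          by (rule exI[of _ "u - 1"]) (auto simp: ign_def u)
      qed
      have "((\<lambda>t. exp (- EA / t) / t) \<longlongrightarrow> 0) (at_right 0)" by (rule lim0[OF EA])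
      then have "((\<lambda>y. exp (- EA / (y - u)) / (y - u)) \<longlongrightarrow> 0) (at_right u)"
        by (subst filterlim_at_right_to_0) simp
      then show "((\<lambda>y. (ign EA uig y - ign EA uig u) / (y - u)) \<longlongrightarrow> 0) (at_right u)"
      proof (rule Lim_transform_eventually)
        show "\<forall>\<^sub>F x in at_right u. exp (- EA / (x - u)) / (x - u) = (ign EA uig x - ign EA uig u) / (x - u)"
          unfolding eventually_at_right_field
          by (rule exI[of _ "u + 1"]) (auto simp: ign_def u)
      qed
    qed
    then show ?thesis using u by (simp add: has_field_derivative_iff dign_def)
  qed
qed

lemma deriv_ign: "EA > 0 \<Longrightarrow> deriv (ign EA uig) u = dign EA uig u"
  using ign_deriv DERIV_imp_deriv by blast

lemma ign_nonneg: "0 \<le> ign EA uig u" by (simp add: ign_def)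
lemma ign_le1: "EA > 0 \<Longrightarrow> ign EA uig u \<le> 1" by (simp add: ign_def)
lemma dign_nonneg: "EA > 0 \<Longrightarrow> 0 \<le> dign EA uig u" by (simp add: dign_def)

lemma dign_bound: assumes EA: "EA > 0" shows "dign EA uig u \<le> 4 / EA"
proof (cases "u \<le> uig")
  case True then show ?thesis using EA by (simp add: dign_def)
next
  case False
  define t where "t = u - uig"
  have t: "t > 0" using False t_def by simp
  define s where "s = EA / t"
  have s: "s > 0" using t EA s_def by simp
  have e1: "1 + s/2 \<le> exp (s/2)" by (rule exp_ge_add_one_self)
  have e2: "s/2 \<le> exp (s/2)" using e1 by linarith
  have "(s/2)\<^sup>2 \<le> (exp (s/2))\<^sup>2" using e2 s by (intro power_mono) auto
  also have "\<dots> = exp s" by (simp add: power2_eq_square exp_add[symmetric])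
  finally have es: "s\<^sup>2 / 4 \<le> exp s" by (simp add: power_divide)
  have d: "dign EA uig u = EA / t\<^sup>2 * exp (- EA / t)"
    using False by (simp add: dign_def t_def)
  have "EA / t\<^sup>2 * exp (- EA / t) = s\<^sup>2 * exp (- s) / EA"
    using EA t unfolding s_def by (simp add: power2_eq_square field_simps)
  then have "dign EA uig u = s\<^sup>2 * exp (- s) / EA" using d by simp
  also have "\<dots> = s\<^sup>2 / exp s / EA" by (simp add: exp_minus field_simps)
  also have "\<dots> \<le> 4 / EA"
    using es EA s by (simp add: divide_right_mono field_simps)
  finally show ?thesis .
qed

lemma ign_cont: "EA > 0 \<Longrightarrow> isCont (ign EA uig) u"
  using ign_deriv DERIV_isCont by blast

lemma lim0b: assumes "EA > 0" shows "((\<lambda>t::real. EA / t\<^sup>2 * exp (- EA / t)) \<longlongrightarrow> 0) (at_right 0)"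
  using assms by real_asymp

lemma dign_cont:
  assumes EA: "EA > 0"
  shows "isCont (dign EA uig) u"
  unfolding isCont_def
proof (cases "u = uig")
  case True
  show "(dign EA uig \<longlongrightarrow> dign EA uig u) (at u)"
  proof (rule filterlim_split_at)
    show "(dign EA uig \<longlongrightarrow> dign EA uig u) (at_left u)"
    proof (rule tendsto_eventually)
      show "\<forall>\<^sub>F x in at_left u. dign EA uig x = dign EA uig u"
        unfolding eventually_at_left_field
        by (rule exI[of _ "u - 1"]) (auto simp: dign_def True)
    qed
    have "((\<lambda>y. EA / (y - u)\<^sup>2 * exp (- EA / (y - u))) \<longlongrightarrow> 0) (at_right u)"
      using lim0b[OF EA] by (subst filterlim_at_right_to_0) simp
    then have "(dign EA uig \<longlongrightarrow> 0) (at_right u)"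
    proof (rule Lim_transform_eventually)
      show "\<forall>\<^sub>F x in at_right u. EA / (x - u)\<^sup>2 * exp (- EA / (x - u)) = dign EA uig x"
        unfolding eventually_at_right_field
        by (rule exI[of _ "u + 1"]) (auto simp: dign_def True)
    qed
    then show "(dign EA uig \<longlongrightarrow> dign EA uig u) (at_right u)" by (simp add: dign_def True)
  qed
next
  case False
  show "(dign EA uig \<longlongrightarrow> dign EA uig u) (at u)"
  proof (cases "u < uig")
    case True
    have "\<forall>\<^sub>F x in at u. x < uig" by (rule order_tendstoD(2)[OF tendsto_ident_at True])
    then have ev: "\<forall>\<^sub>F x in at u. 0 = dign EA uig x"
      by (rule eventually_mono) (simp add: dign_def)
    have "(dign EA uig \<longlongrightarrow> 0) (at u)" by (rule Lim_transform_eventually[OF tendsto_const ev])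
    then show ?thesis using True by (simp add: dign_def)
  next
    case gt: False
    then have gt: "u > uig" using False by simp
    have "\<forall>\<^sub>F x in at u. uig < x" by (rule order_tendstoD(1)[OF tendsto_ident_at gt])
    then have ev: "\<forall>\<^sub>F x in at u. EA / (x - uig)\<^sup>2 * exp (- EA / (x - uig)) = dign EA uig x"
      by (rule eventually_mono) (simp add: dign_def)
    have "((\<lambda>x. EA / (x - uig)\<^sup>2 * exp (- EA / (x - uig))) \<longlongrightarrow> EA / (u - uig)\<^sup>2 * exp (- EA / (u - uig))) (at u)"
      using gt by (intro tendsto_intros) auto
    then have "(dign EA uig \<longlongrightarrow> EA / (u - uig)\<^sup>2 * exp (- EA / (u - uig))) (at u)"
      by (rule Lim_transform_eventually[OF _ ev])
    then show ?thesis using gt by (simp add: dign_def)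
  qed
qed


lemma exists_min:
  fixes f :: "real \<Rightarrow> real"
  assumes c: "\<And>x. isCont f x" and la: "(f \<longlongrightarrow> la) at_bot" and lb: "(f \<longlongrightarrow> lb) at_top"
    and x1: "f x1 < la" "f x1 < lb"
  shows "\<exists>x0. \<forall>x. f x0 \<le> f x"
proof -
  have "eventually (\<lambda>x. f x1 < f x) at_bot" by (rule order_tendstoD(1)[OF la x1(1)])
  then obtain A where A: "\<And>x. x \<le> A \<Longrightarrow> f x1 < f x" unfolding eventually_at_bot_linorder by blast
  have "eventually (\<lambda>x. f x1 < f x) at_top" by (rule order_tendstoD(1)[OF lb x1(2)])
  then obtain B where B: "\<And>x. x \<ge> B \<Longrightarrow> f x1 < f x" unfolding eventually_at_top_linorder by blast
  define S where "S = {min A x1..max B x1}"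
  have "\<exists>x\<in>S. \<forall>y\<in>S. f x \<le> f y"
    unfolding S_def by (rule continuous_attains_inf) (auto intro!: continuous_at_imp_continuous_on c)
  then obtain x0 where x0: "x0 \<in> S" "\<And>y. y \<in> S \<Longrightarrow> f x0 \<le> f y" by blast
  have x1S: "x1 \<in> S" unfolding S_def by auto
  have "f x0 \<le> f x" for x
  proof (cases "x \<in> S")
    case True then show ?thesis using x0 by blast
  next
    case False
    then have "x \<le> A \<or> x \<ge> B" unfolding S_def by auto
    then have "f x1 < f x" using A B by blast
    then show ?thesis using x0(2)[OF x1S] by linarith
  qed
  then show ?thesis by blast
qed

lemma exists_last:
  fixes f :: "real \<Rightarrow> real"
  assumes c: "\<And>x. isCont f x" and y: "y \<le> x0" "c \<le> f y"
  shows "\<exists>t. y \<le> t \<and> t \<le> x0 \<and> c \<le> f t \<and> (\<forall>s. t < s \<and> s \<le> x0 \<longrightarrow> f s < c)"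
proof -
  define T where "T = {y..x0} \<inter> {t. c \<le> f t}"
  have "compact T" unfolding T_def
    by (intro compact_Int_closed compact_Icc closed_Collect_le continuous_intros)
       (auto intro!: continuous_at_imp_continuous_on c)
  moreover have "T \<noteq> {}" using y unfolding T_def by auto
  ultimately have "\<exists>t\<in>T. \<forall>s\<in>T. s \<le> t"
    using continuous_attains_sup[of T "\<lambda>t. t"] by (auto intro: continuous_on_id)
  then obtain t where t: "t \<in> T" "\<And>s. s \<in> T \<Longrightarrow> s \<le> t" by blast
  have "f s < c" if "t < s" "s \<le> x0" for s
  proof (rule ccontr)
    assume "\<not> f s < c"
    then have "s \<in> T" using that t(1) unfolding T_def by auto
    then show False using t(2) that by fastforce
  qed
  then show ?thesis using t(1) unfolding T_def by auto
qed

lemma zpos: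
  fixes z z1 z2 b :: "real \<Rightarrow> real"
  assumes D: "D > 0"
    and dz: "\<And>x. (z has_real_derivative z1 x) (at x)" and dz1: "\<And>x. (z1 has_real_derivative z2 x) (at x)"
    and eq: "\<And>x. - z1 x = D * z2 x - b x * z x" and bpos: "\<And>x. b x \<ge> 0"
    and l0: "(z \<longlongrightarrow> 0) at_bot" and l1: "(z \<longlongrightarrow> 1) at_top"
  shows "z x \<ge> 0"
proof (rule ccontr)
  assume "\<not> z x \<ge> 0"
  then have zx: "z x < 0" by simp
  have cz: "\<And>x. isCont z x" using dz DERIV_isCont by blast
  obtain x0 where x0: "\<And>y. z x0 \<le> z y" using exists_min[OF cz l0 l1, of x] zx by auto
  define m where "m = z x0"
  have m: "m < 0" using x0[of x] zx m_def by simp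
  have z1x0: "z1 x0 = 0"
    by (rule DERIV_local_min[OF dz, of 1]) (auto simp: x0)
  have "eventually (\<lambda>x. m/2 < z x) at_bot" by (rule order_tendstoD(1)[OF l0]) (use m in simp)
  then obtain N where N: "\<And>x. x \<le> N \<Longrightarrow> m/2 < z x" unfolding eventually_at_bot_linorder by blast
  define y where "y = min N x0"
  have y: "y \<le> x0" "m/2 \<le> z y" using N[of y] unfolding y_def by auto
  obtain t where t: "y \<le> t" "t \<le> x0" "m/2 \<le> z t" "\<And>s. t < s \<Longrightarrow> s \<le> x0 \<Longrightarrow> z s < m/2"
    using exists_last[OF cz y] by blast
  have tx0: "t < x0" using t(2,3) m m_def by (cases "t = x0") auto
  obtain \<xi> where xi: "t < \<xi>" "\<xi> < x0" "z x0 - z t = (x0 - t) * z1 \<xi>"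
    using MVT2[OF tx0, of z z1] dz by blast
  define g where "g s = z1 s * exp (s / D)" for s
  have dg: "(g has_real_derivative exp (s / D) / D * (b s * z s)) (at s)" for s
  proof -
    have "(g has_real_derivative z2 s * exp (s / D) + z1 s * (exp (s / D) * (1 / D))) (at s)"
      unfolding g_def using D by (auto intro!: derivative_eq_intros dz1)
    moreover have "z2 s * exp (s / D) + z1 s * (exp (s / D) * (1 / D)) = exp (s / D) / D * (b s * z s)"
    proof -
      have h: "z1 s + D * z2 s = b s * z s" using eq[of s] by simp
      have "z2 s * exp (s / D) + z1 s * (exp (s / D) * (1 / D)) = exp (s / D) / D * (z1 s + D * z2 s)"
        using D by (simp add: field_simps)
      then show ?thesis unfolding h .
    qed
    ultimately show ?thesis by simp
  qed
  have "g x0 \<le> g \<xi>"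
  proof (rule DERIV_nonpos_imp_nonincreasing[of \<xi> x0 g])
    show "\<xi> \<le> x0" using xi by simp
    fix s assume s: "\<xi> \<le> s" "s \<le> x0"
    have "z s < 0" using t(4)[of s] s xi m by simp
    then have "b s * z s \<le> 0" using bpos[of s] by (simp add: mult_nonneg_nonpos)
    moreover have "exp (s / D) / D \<ge> 0" using D by simp
    ultimately have "exp (s / D) / D * (b s * z s) \<le> 0"
      using mult_nonneg_nonpos by blast
    then show "\<exists>y. DERIV g s :> y \<and> y \<le> 0" using dg by blast
  qed
  then have "0 \<le> z1 \<xi>" unfolding g_def using z1x0 by (simp add: zero_le_mult_iff)
  then have "z x0 - z t \<ge> 0" using xi tx0 by simp
  then show False using t(3) m m_def by simp
qed

lemma bounded_lim:
  fixes f :: "real \<Rightarrow> real"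
  assumes c: "\<And>x. isCont f x" and la: "(f \<longlongrightarrow> la) at_bot" and lb: "(f \<longlongrightarrow> lb) at_top"
  shows "\<exists>B. \<forall>x. \<bar>f x\<bar> \<le> B"
proof -
  have "eventually (\<lambda>x. \<bar>f x\<bar> < \<bar>la\<bar> + 1) at_bot"
    by (rule order_tendstoD(2)[OF tendsto_rabs[OF la]]) simp
  then obtain A where A: "\<And>x. x \<le> A \<Longrightarrow> \<bar>f x\<bar> < \<bar>la\<bar> + 1" unfolding eventually_at_bot_linorder by blast
  have "eventually (\<lambda>x. \<bar>f x\<bar> < \<bar>lb\<bar> + 1) at_top"
    by (rule order_tendstoD(2)[OF tendsto_rabs[OF lb]]) simp
  then obtain B where B: "\<And>x. x \<ge> B \<Longrightarrow> \<bar>f x\<bar> < \<bar>lb\<bar> + 1" unfolding eventually_at_top_linorder by blast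
  define S where "S = {A..max A B}"
  have "\<exists>x\<in>S. \<forall>y\<in>S. \<bar>f y\<bar> \<le> \<bar>f x\<bar>"
    unfolding S_def by (rule continuous_attains_sup) (auto intro!: continuous_at_imp_continuous_on continuous_intros c)
  then obtain x0 where x0: "\<And>y. y \<in> S \<Longrightarrow> \<bar>f y\<bar> \<le> \<bar>f x0\<bar>" by blast
  have "\<bar>f x\<bar> \<le> max \<bar>f x0\<bar> (max (\<bar>la\<bar> + 1) (\<bar>lb\<bar> + 1))" for x
  proof (cases "x \<in> S")
    case True then show ?thesis using x0 by fastforce
  next
    case False
    then have "x \<le> A \<or> x \<ge> B" unfolding S_def by auto
    then show ?thesis using A B by fastforce
  qed
  then show ?thesis by blast
qed


lemma fdiff: "(v - v\<^sup>2/2) - (w - w\<^sup>2/2) = (v - w) * (1 - (v + w)/2)" for v w :: real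
  by (simp add: power2_eq_square field_simps)

lemma ubounds:
  fixes u u1 u2 r :: "real \<Rightarrow> real"
  assumes du: "\<And>x. (u has_real_derivative u1 x) (at x)" and du1: "\<And>x. (u1 has_real_derivative u2 x) (at x)"
    and eq: "\<And>x. - u1 x + u x * u1 x = u2 x + r x" and rpos: "\<And>x. r x \<ge> 0"
    and lm: "(u \<longlongrightarrow> um) at_bot" and lp: "(u \<longlongrightarrow> up) at_top"
    and ord: "up < um" "um < 1"
  shows "up \<le> u x \<and> u x \<le> um"
proof -
  define f where "f v = v - v\<^sup>2/2" for v :: real
  define \<psi> where "\<psi> x = u1 x + f (u x)" for x
  have cu: "\<And>x. isCont u x" using du DERIV_isCont by blast
  have dpsi: "(\<psi> has_real_derivative - r x) (at x)" for x
  proof -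
    have "(\<psi> has_real_derivative u2 x + (u1 x - u1 x * u x)) (at x)"
      unfolding \<psi>_def f_def by (auto intro!: derivative_eq_intros du du1 simp: power2_eq_square)
    moreover have "u2 x + (u1 x - u1 x * u x) = - r x" using eq[of x] by (simp add: algebra_simps)
    ultimately show ?thesis by simp
  qed
  have psimono: "\<psi> y \<le> \<psi> x" if "x \<le> y" for x y
  proof (rule DERIV_nonpos_imp_nonincreasing[of x y \<psi>])
    fix s show "\<exists>y. DERIV \<psi> s :> y \<and> y \<le> 0" using dpsi[of s] rpos[of s] by (intro exI[of _ "- r s"]) simp
  qed (rule that)
  have cf: "continuous_on UNIV f" unfolding f_def by (intro continuous_intros) auto
  have lfm: "((\<lambda>x. f (u x)) \<longlongrightarrow> f um) at_bot"
    unfolding f_def by (intro tendsto_intros lm) auto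
  have lfp: "((\<lambda>x. f (u x)) \<longlongrightarrow> f up) at_top"
    unfolding f_def by (intro tendsto_intros lp) auto
  have psiA: "\<psi> x \<ge> f up" for x
  proof (rule ccontr)
    assume "\<not> \<psi> x \<ge> f up"
    define e where "e = (f up - \<psi> x) / 2"
    have e: "e > 0" using \<open>\<not> \<psi> x \<ge> f up\<close> e_def by simp
    have "eventually (\<lambda>s. f up - e < f (u s)) at_top" by (rule order_tendstoD(1)[OF lfp]) (use e in simp)
    then obtain B where B: "\<And>s. s \<ge> B \<Longrightarrow> f up - e < f (u s)" unfolding eventually_at_top_linorder by blast
    have "eventually (\<lambda>s. up - 1 < u s) at_top" by (rule order_tendstoD(1)[OF lp]) simp
    then obtain C where C: "\<And>s. s \<ge> C \<Longrightarrow> up - 1 < u s" unfolding eventually_at_top_linorder by blast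
    define A where "A = max B x"
    have neg: "u1 s \<le> - e" if "s \<ge> A" for s
    proof -
      have "\<psi> s \<le> \<psi> x" using psimono[of x s] that A_def by simp
      moreover have "f up - e < f (u s)" using B[of s] that A_def by simp
      ultimately show ?thesis unfolding \<psi>_def e_def by argo
    qed
    define y where "y = max A C + \<bar>u A - up + 1\<bar> / e"
    have "\<bar>u A - up + 1\<bar> / e \<ge> 0" using e by simp
    then have yA: "A \<le> y" unfolding y_def by linarith
    have "u y + e * y \<le> u A + e * A"
    proof (rule DERIV_nonpos_imp_nonincreasing[of A y "\<lambda>s. u s + e * s"])
      fix s assume "A \<le> s" "s \<le> y"
      have "DERIV (\<lambda>s. u s + e * s) s :> u1 s + e" by (auto intro!: derivative_eq_intros du)
      then show "\<exists>z. DERIV (\<lambda>s. u s + e * s) s :> z \<and> z \<le> 0" using neg[of s] \<open>A \<le> s\<close> by (intro exI[of _ "u1 s + e"]) simp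
    qed (rule yA)
    then have "u y \<le> u A - e * (y - A)" by (simp add: algebra_simps)
    moreover have "e * (y - A) \<ge> \<bar>u A - up + 1\<bar>"
    proof -
      have "y - A \<ge> \<bar>u A - up + 1\<bar> / e" unfolding y_def by simp
      then show ?thesis using e by (simp add: pos_divide_le_eq mult.commute)
    qed
    moreover have "up - 1 < u y" using C[of y] yA unfolding y_def using \<open>\<bar>u A - up + 1\<bar> / e \<ge> 0\<close> by simp
    ultimately show False by linarith
  qed
  have psiB: "\<psi> x \<le> f um" for x
  proof (rule ccontr)
    assume "\<not> \<psi> x \<le> f um"
    define e where "e = (\<psi> x - f um) / 2"
    have e: "e > 0" using \<open>\<not> \<psi> x \<le> f um\<close> e_def by simp
    have "eventually (\<lambda>s. f (u s) < f um + e) at_bot" by (rule order_tendstoD(2)[OF lfm]) (use e in simp)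
    then obtain B where B: "\<And>s. s \<le> B \<Longrightarrow> f (u s) < f um + e" unfolding eventually_at_bot_linorder by blast
    have "eventually (\<lambda>s. um - 1 < u s) at_bot" by (rule order_tendstoD(1)[OF lm]) simp
    then obtain C where C: "\<And>s. s \<le> C \<Longrightarrow> um - 1 < u s" unfolding eventually_at_bot_linorder by blast
    define A where "A = min B x"
    have pos: "u1 s \<ge> e" if "s \<le> A" for s
    proof -
      have "\<psi> x \<le> \<psi> s" using psimono[of s x] that A_def by simp
      moreover have "f (u s) < f um + e" using B[of s] that A_def by simp
      ultimately show ?thesis unfolding \<psi>_def e_def by argo
    qed
    define y where "y = min A C - \<bar>u A - um + 1\<bar> / e"
    have "\<bar>u A - um + 1\<bar> / e \<ge> 0" using e by simp
    then have yA: "y \<le> A" unfolding y_def by linarith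
    have "u y - e * y \<le> u A - e * A"
    proof (rule DERIV_nonneg_imp_nondecreasing[of y A "\<lambda>s. u s - e * s"])
      fix s assume "y \<le> s" "s \<le> A"
      have "DERIV (\<lambda>s. u s - e * s) s :> u1 s - e" by (auto intro!: derivative_eq_intros du)
      then show "\<exists>z. DERIV (\<lambda>s. u s - e * s) s :> z \<and> z \<ge> 0" using pos[of s] \<open>s \<le> A\<close> by (intro exI[of _ "u1 s - e"]) simp
    qed (rule yA)
    then have "u y \<le> u A - e * (A - y)" by (simp add: algebra_simps)
    moreover have "e * (A - y) \<ge> \<bar>u A - um + 1\<bar>"
    proof -
      have "A - y \<ge> \<bar>u A - um + 1\<bar> / e" unfolding y_def by simp
      then show ?thesis using e by (simp add: pos_divide_le_eq mult.commute)
    qed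
    moreover have "um - 1 < u y" using C[of y] yA unfolding y_def using \<open>\<bar>u A - um + 1\<bar> / e \<ge> 0\<close> by simp
    ultimately show False by linarith
  qed
  have lower: "up \<le> u x" for x
  proof (rule ccontr)
    assume "\<not> up \<le> u x"
    then have ux: "u x < up" by simp
    obtain x0 where x0: "\<And>y. u x0 \<le> u y" using exists_min[OF cu lm lp, of x] ux ord by auto
    have "u1 x0 = 0" by (rule DERIV_local_min[OF du, of 1]) (auto simp: x0)
    then have "f (u x0) \<ge> f up" using psiA[of x0] unfolding \<psi>_def by simp
    moreover have "u x0 < up" using x0[of x] ux by simp
    moreover have "f (u x0) - f up = (u x0 - up) * (1 - (u x0 + up)/2)" unfolding f_def by (rule fdiff)
    moreover have "1 - (u x0 + up)/2 > 0" using calculation(2) ord by simp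
    ultimately have "(u x0 - up) * (1 - (u x0 + up)/2) < 0" by (intro mult_neg_pos) auto
    then show False using \<open>f (u x0) \<ge> f up\<close> \<open>f (u x0) - f up = _\<close> by linarith
  qed
  have upper: "u x \<le> um" for x
  proof (rule ccontr)
    assume "\<not> u x \<le> um"
    then have ux: "u x > um" by simp
    define c where "c = min ((u x + um)/2) ((um + 1)/2)"
    have c: "um < c" "c < u x" "c < 1" using ux ord unfolding c_def min_def by (auto simp: field_simps)
    have "eventually (\<lambda>s. u s < c) at_bot" by (rule order_tendstoD(2)[OF lm]) (use c in simp)
    then obtain N where N: "\<And>s. s \<le> N \<Longrightarrow> u s < c" unfolding eventually_at_bot_linorder by blast
    define y where "y = min N x"
    have y: "y \<le> x" "- c \<le> - u y" using N[of y] unfolding y_def by auto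
    have cmu: "\<And>s. isCont (\<lambda>s. - u s) s" using cu by (auto intro: continuous_intros)
    obtain t where t: "y \<le> t" "t \<le> x" "- c \<le> - u t" "\<And>s. t < s \<Longrightarrow> s \<le> x \<Longrightarrow> - u s < - c"
      using exists_last[OF cmu y] by blast
    have tx: "t < x" using t(2,3) c by (cases "t = x") auto
    have "\<exists>d>0. \<forall>s. dist s t < d \<longrightarrow> dist (u s) (u t) < 2 - um - c"
      using cu[of t] c ord unfolding continuous_at_eps_delta by simp
    then obtain d where d: "d > 0" "\<And>s. dist s t < d \<Longrightarrow> dist (u s) (u t) < 2 - um - c" by blast
    define r where "r = min x (t + d/2)"
    have tr: "t < r" "r \<le> x" using tx d unfolding r_def by auto
    obtain \<xi> where xi: "t < \<xi>" "\<xi> < r" "u r - u t = (r - t) * u1 \<xi>"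
      using MVT2[OF tr(1), of u u1] du by blast
    have uxi1: "u \<xi> > c" using t(4)[of \<xi>] xi tr by simp
    have "dist \<xi> t < d" using xi unfolding r_def dist_real_def by simp
    then have "\<bar>u \<xi> - u t\<bar> < 2 - um - c" using d(2) by (simp add: dist_real_def)
    then have uxi2: "u \<xi> < 2 - um" using t(3) unfolding abs_less_iff by linarith
    have "f (u \<xi>) - f um = (u \<xi> - um) * (1 - (u \<xi> + um)/2)" unfolding f_def by (rule fdiff)
    moreover have "(u \<xi> - um) * (1 - (u \<xi> + um)/2) > 0" using uxi1 uxi2 c by (intro mult_pos_pos) auto
    ultimately have "f (u \<xi>) > f um" by simp
    then have "u1 \<xi> < 0" using psiB[of \<xi>] unfolding \<psi>_def by simp
    then have "(r - t) * u1 \<xi> < 0" using xi by (intro mult_pos_neg) auto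
    then have "u r < u t" using xi(3) by linarith
    moreover have "u r > c" using t(4)[of r] tr by simp
    ultimately show False using t(3) by simp
  qed
  show ?thesis using lower upper by blast
qed


lemma reim: "Re y + \<bar>Im y\<bar> \<le> sqrt 2 * cmod y"
proof -
  have "(Re y + \<bar>Im y\<bar>)\<^sup>2 \<le> 2 * ((Re y)\<^sup>2 + (Im y)\<^sup>2)"
    using sum_squares_bound[of "Re y" "\<bar>Im y\<bar>"] by (simp add: power2_eq_square algebra_simps)
  also have "\<dots> = (sqrt 2 * cmod y)\<^sup>2"
    by (simp add: power_mult_distrib cmod_power2)
  finally have "(Re y + \<bar>Im y\<bar>)\<^sup>2 \<le> (sqrt 2 * cmod y)\<^sup>2" .
  then show ?thesis using abs_le_square_iff[of "Re y + \<bar>Im y\<bar>" "sqrt 2 * cmod y"]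
    by (smt (verit) norm_ge_zero real_sqrt_ge_zero mult_nonneg_nonneg)
qed

lemma pw1:
  fixes x1 y zz ub q D :: real
  assumes "0 \<le> x1" "0 \<le> y" "0 \<le> zz" "0 \<le> ub" "ub \<le> 1" "0 < q" "q \<le> 1/2"
  shows "sqrt 2 * (x1 * y + q * ub * zz * y + q * \<bar>D - 1\<bar> * zz * x1)
         \<le> 3/4 * x1\<^sup>2 + 3 * y\<^sup>2 + (1/8 + \<bar>D - 1\<bar>\<^sup>2 / 4) * zz\<^sup>2"
proof -
  define s where "s = sqrt 2"
  have s2: "s * s = 2" unfolding s_def by simp
  have s0: "s \<ge> 0" unfolding s_def by simp
  have h1: "s * (x1 * y) \<le> x1\<^sup>2 / 4 + 2 * y\<^sup>2"
  proof -
    have "0 \<le> (x1 / 2 - s * y)\<^sup>2" by simp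
    also have "\<dots> = x1\<^sup>2 / 4 - s * (x1 * y) + (s * s) * y\<^sup>2" by (simp add: power2_eq_square algebra_simps)
    finally show ?thesis using s2 by simp
  qed
  have h2: "s * (q * ub * zz * y) \<le> y\<^sup>2 + zz\<^sup>2 / 8"
  proof -
    have qu: "q * ub \<le> 1/2" using assms mult_mono[of q "1/2" ub 1] by simp
    have "s * (q * ub * zz * y) \<le> s * (1/2 * zz * y)"
      using qu assms s0 by (intro mult_left_mono mult_right_mono) auto
    moreover have "s * (1/2 * zz * y) \<le> y\<^sup>2 + zz\<^sup>2 / 8"
    proof -
      have "0 \<le> (y - s / 4 * zz)\<^sup>2" by simp
      also have "\<dots> = y\<^sup>2 - s * (1/2 * zz * y) + (s * s) / 16 * zz\<^sup>2" by (simp add: power2_eq_square algebra_simps)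
      finally show ?thesis using s2 by simp
    qed
    ultimately show ?thesis by linarith
  qed
  have h3: "s * (q * \<bar>D - 1\<bar> * zz * x1) \<le> x1\<^sup>2 / 2 + \<bar>D - 1\<bar>\<^sup>2 / 4 * zz\<^sup>2"
  proof -
    define t where "t = q * \<bar>D - 1\<bar> * zz"
    have "t\<^sup>2 = q\<^sup>2 * (\<bar>D - 1\<bar>\<^sup>2 * zz\<^sup>2)" unfolding t_def by (simp add: power_mult_distrib)
    also have "\<dots> \<le> (1/2)\<^sup>2 * (\<bar>D - 1\<bar>\<^sup>2 * zz\<^sup>2)"
      using assms by (intro mult_right_mono power_mono) auto
    finally have b: "t\<^sup>2 \<le> \<bar>D - 1\<bar>\<^sup>2 * zz\<^sup>2 / 4" by (simp add: power2_eq_square)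
    have "0 \<le> (s / 2 * x1 - t)\<^sup>2" by simp
    also have "\<dots> = (s * s) / 4 * x1\<^sup>2 - s * (t * x1) + t\<^sup>2" by (simp add: power2_eq_square algebra_simps)
    finally have "s * (t * x1) \<le> x1\<^sup>2 / 2 + t\<^sup>2" using s2 by simp
    then show ?thesis using b unfolding t_def by (simp add: algebra_simps)
  qed
  have "s * (x1 * y + q * ub * zz * y + q * \<bar>D - 1\<bar> * zz * x1)
      = s * (x1 * y) + s * (q * ub * zz * y) + s * (q * \<bar>D - 1\<bar> * zz * x1)" by (simp add: algebra_simps)
  also have "\<dots> \<le> 3/4 * x1\<^sup>2 + 3 * y\<^sup>2 + (1/8 + \<bar>D - 1\<bar>\<^sup>2 / 4) * zz\<^sup>2"
    using h1 h2 h3 by (simp add: algebra_simps)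
  finally show ?thesis unfolding s_def .
qed

lemma pw2:
  fixes a b q k L M D p y v :: real
  assumes "0 \<le> a" "a \<le> k * L" "a + q * a - b \<le> k * M" "D > 0" "0 \<le> p" "0 \<le> y" "0 \<le> v"
  shows "(q * a - b) * y\<^sup>2 + p * y + sqrt 2 * (a * v * y)
         \<le> k * M * y\<^sup>2 + D * p\<^sup>2 + y\<^sup>2 / (4 * D) + k * L / 2 * v\<^sup>2"
proof -
  define s where "s = sqrt 2"
  have s2: "s * s = 2" unfolding s_def by simp
  have h1: "p * y \<le> D * p\<^sup>2 + y\<^sup>2 / (4 * D)"
  proof -
    have "0 \<le> (2 * D * p - y)\<^sup>2 / (4 * D)" using assms by simp
    also have "\<dots> = D * p\<^sup>2 - p * y + y\<^sup>2 / (4 * D)" using assms by (simp add: power2_eq_square field_simps)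
    finally show ?thesis by simp
  qed
  have h2: "s * (a * v * y) \<le> a * y\<^sup>2 + a / 2 * v\<^sup>2"
  proof -
    have "0 \<le> a * (y - s / 2 * v)\<^sup>2" using assms by simp
    also have "\<dots> = a * y\<^sup>2 - s * (a * v * y) + a * (s * s) / 4 * v\<^sup>2"
      by (simp add: power2_eq_square algebra_simps)
    finally show ?thesis using s2 by simp
  qed
  have h3: "a / 2 * v\<^sup>2 \<le> k * L / 2 * v\<^sup>2" using assms by (intro mult_right_mono) auto
  have h4: "(q * a - b) * y\<^sup>2 + a * y\<^sup>2 \<le> k * M * y\<^sup>2"
  proof -
    have "(q * a - b) * y\<^sup>2 + a * y\<^sup>2 = (a + q * a - b) * y\<^sup>2" by (simp add: algebra_simps)
    also have "\<dots> \<le> k * M * y\<^sup>2" using assms by (intro mult_right_mono) auto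
    finally show ?thesis .
  qed
  show ?thesis using h1 h2 h3 h4 unfolding s_def by linarith
qed


theorem proposition3p1:
  fixes q k D EA uig um up L M :: real
    and ub zb :: "real \<Rightarrow> real"
    and lam :: complex
  assumes q: "0 < q" "q \<le> 1/2"
    and k: "k > 0" and D: "D > 0" and EA: "EA > 0"
    and RH: "(up\<^sup>2 - um\<^sup>2) / 2 = up - um + q"
    and ord: "0 \<le> up" "up < uig" "uig < um" "um < 1"
    and prof: "weak_det_profile q k D EA uig um up ub zb"
    and L_def: "L = (SUP x. deriv (ign EA uig) (ub x) * zb x)"
    and M_def: "M = (SUP x. (1 + q) * deriv (ign EA uig) (ub x) * zb x - ign EA uig (ub x))"
    and Lpos: "L > 0"
    and lam: "Re lam \<ge> 0"
    and eig: "\<exists>w w1 w2 z z1 z2.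
               H2_with w w1 w2 \<and> H2_with z z1 z2 \<and> (\<exists>x. w x \<noteq> 0 \<or> z x \<noteq> 0) \<and>
               (\<forall>x. lam * w x - (1 - of_real (ub x)) * w1 x
                     = of_real (q * ub x) * z x + of_real (q * (D - 1)) * z1 x + w2 x) \<and>
               (\<forall>x. lam * z x + of_real (k * (ign EA uig (ub x) - q * deriv (ign EA uig) (ub x) * zb x)) * z x
                     = z1 x + of_real (k * deriv (ign EA uig) (ub x) * zb x) * w1 x + of_real D * z2 x)"
  shows "Re lam + \<bar>Im lam\<bar> \<le> max 3 (1 / (4 * D) + (1/4 + 1/2 * \<bar>D - 1\<bar>\<^sup>2) * k * L + k * M)"

proof -
  obtain ub1 ub2 zb1 zb2 where
    dub: "\<And>x. (ub has_real_derivative ub1 x) (at x)" and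
    dub1: "\<And>x. (ub1 has_real_derivative ub2 x) (at x)" and
    dzb: "\<And>x. (zb has_real_derivative zb1 x) (at x)" and
    dzb1: "\<And>x. (zb1 has_real_derivative zb2 x) (at x)" and
    equ: "\<And>x. - ub1 x + ub x * ub1 x = ub2 x + q * k * ign EA uig (ub x) * zb x" and
    eqz: "\<And>x. - zb1 x = D * zb2 x - k * ign EA uig (ub x) * zb x" and
    lum: "(ub \<longlongrightarrow> um) at_bot" and lz0: "(zb \<longlongrightarrow> 0) at_bot" and
    lup: "(ub \<longlongrightarrow> up) at_top" and lz1: "(zb \<longlongrightarrow> 1) at_top"
    using prof unfolding weak_det_profile_def by blast
  have zb0: "0 \<le> zb x" for x
  proof (rule zpos[OF D dzb dzb1 _ _ lz0 lz1, of "\<lambda>x. k * ign EA uig (ub x)"])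
    show "- zb1 x = D * zb2 x - k * ign EA uig (ub x) * zb x" for x using eqz[of x] by simp
    show "0 \<le> k * ign EA uig (ub x)" for x using k ign_nonneg[of EA uig "ub x"] by simp
  qed
  have ubb: "up \<le> ub x \<and> ub x \<le> um" for x
  proof (rule ubounds[OF dub dub1 equ _ lum lup])
    show "0 \<le> q * k * ign EA uig (ub x) * zb x" for x
      using q k ign_nonneg[of EA uig "ub x"] zb0[of x] by simp
  qed (use ord in auto)
  have ub0: "0 \<le> ub x" and ub1': "ub x \<le> 1" for x using ubb[of x] ord by auto
  have cub: "isCont ub x" for x using dub DERIV_isCont by blast
  have czb: "isCont zb x" for x using dzb DERIV_isCont by blast
  obtain Zb where Zb: "\<And>x. \<bar>zb x\<bar> \<le> Zb" using bounded_lim[OF czb lz0 lz1] by blast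
  have dd: "deriv (ign EA uig) u = dign EA uig u" for u using deriv_ign[OF EA] by simp
  define a where "a x = k * dign EA uig (ub x) * zb x" for x
  define b where "b x = k * ign EA uig (ub x)" for x
  have a0: "0 \<le> a x" for x unfolding a_def using k dign_nonneg[OF EA] zb0 by simp
  have pb: "dign EA uig (ub x) * zb x \<le> 4 / EA * Zb" for x
    using dign_nonneg[OF EA] dign_bound[OF EA] zb0[of x] Zb[of x] EA by (intro mult_mono) auto
  have bddL: "bdd_above (range (\<lambda>x. dign EA uig (ub x) * zb x))"
    using pb by (intro bdd_aboveI2) auto
  have Ld: "L = (SUP x. dign EA uig (ub x) * zb x)" using L_def by (simp add: dd)
  have aL: "a x \<le> k * L" for x
  proof -
    have "dign EA uig (ub x) * zb x \<le> L" unfolding Ld by (rule cSUP_upper[OF UNIV_I bddL])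
    then show ?thesis unfolding a_def using k by (simp add: mult.assoc)
  qed
  have bddM: "bdd_above (range (\<lambda>x. (1 + q) * dign EA uig (ub x) * zb x - ign EA uig (ub x)))"
  proof (intro bdd_aboveI2)
    fix x
    have "(1 + q) * (dign EA uig (ub x) * zb x) \<le> (1 + q) * (4 / EA * Zb)"
      using pb[of x] q by (intro mult_left_mono) auto
    then show "(1 + q) * dign EA uig (ub x) * zb x - ign EA uig (ub x) \<le> (1 + q) * (4 / EA * Zb)"
      using ign_nonneg[of EA uig "ub x"] by (simp add: mult.assoc)
  qed
  have Md: "M = (SUP x. (1 + q) * dign EA uig (ub x) * zb x - ign EA uig (ub x))" using M_def by (simp add: dd)
  have aM: "a x + q * a x - b x \<le> k * M" for x
  proof -
    have "(1 + q) * dign EA uig (ub x) * zb x - ign EA uig (ub x) \<le> M" unfolding Md by (rule cSUP_upper[OF UNIV_I bddM])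
    then have "k * ((1 + q) * dign EA uig (ub x) * zb x - ign EA uig (ub x)) \<le> k * M" using k by (intro mult_left_mono) auto
    then show ?thesis unfolding a_def b_def by (simp add: algebra_simps)
  qed
  have ca: "isCont a x" for x unfolding a_def
    by (intro continuous_intros isCont_o2[OF cub dign_cont[OF EA]] czb)
  have cb: "isCont b x" for x unfolding b_def
    by (intro continuous_intros isCont_o2[OF cub ign_cont[OF EA]])
  have kL0: "0 \<le> k * L" using k Lpos by simp
  obtain w w1 w2 z z1 z2 where
    Hw: "H2_with w w1 w2" and Hz: "H2_with z z1 z2" and nt: "\<exists>x. w x \<noteq> 0 \<or> z x \<noteq> 0" and
    E1: "\<And>x. lam * w x - (1 - of_real (ub x)) * w1 x
                     = of_real (q * ub x) * z x + of_real (q * (D - 1)) * z1 x + w2 x" and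
    E2: "\<And>x. lam * z x + of_real (k * (ign EA uig (ub x) - q * deriv (ign EA uig) (ub x) * zb x)) * z x
                     = z1 x + of_real (k * deriv (ign EA uig) (ub x) * zb x) * w1 x + of_real D * z2 x"
    using eig by blast
  have dw: "\<And>x. (w has_vector_derivative w1 x) (at x)" and dw1: "\<And>x. (w1 has_vector_derivative w2 x) (at x)"
    and iw: "integrable lborel (\<lambda>x. (cmod (w x))\<^sup>2)" and iw1: "integrable lborel (\<lambda>x. (cmod (w1 x))\<^sup>2)"
    and iw2: "integrable lborel (\<lambda>x. (cmod (w2 x))\<^sup>2)"
    using Hw unfolding H2_with_def by auto
  have dz: "\<And>x. (z has_vector_derivative z1 x) (at x)" and dz1: "\<And>x. (z1 has_vector_derivative z2 x) (at x)"
    and iz: "integrable lborel (\<lambda>x. (cmod (z x))\<^sup>2)" and iz1: "integrable lborel (\<lambda>x. (cmod (z1 x))\<^sup>2)"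
    and iz2: "integrable lborel (\<lambda>x. (cmod (z2 x))\<^sup>2)"
    using Hz unfolding H2_with_def by auto
  define c1 where "c1 = complex_of_real (q * (D - 1))"
  have E1': "w2 x = lam * w x - of_real (1 - ub x) * w1 x - of_real (q * ub x) * z x - c1 * z1 x" for x
    using E1[of x] unfolding c1_def by (simp add: algebra_simps)
  have E2': "of_real D * z2 x = lam * z x + of_real (b x - q * a x) * z x - z1 x - of_real (a x) * w1 x" for x
  proof -
    have e1: "k * (ign EA uig (ub x) - q * deriv (ign EA uig) (ub x) * zb x) = b x - q * a x"
      unfolding a_def b_def dd by (simp add: algebra_simps)
    have e2: "k * deriv (ign EA uig) (ub x) * zb x = a x" unfolding a_def dd by simp
    show ?thesis using E2[of x] unfolding e1 e2 by (simp add: algebra_simps)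
  qed
  have cw: "\<And>x. isCont w x" and cw1: "\<And>x. isCont w1 x" and cz: "\<And>x. isCont z x" and cz1: "\<And>x. isCont z1 x"
    using cont_of_der(2) dw dw1 dz dz1 by blast+
  have mw: "w \<in> borel_measurable lborel" and mw1: "w1 \<in> borel_measurable lborel"
    and mz: "z \<in> borel_measurable lborel" and mz1: "z1 \<in> borel_measurable lborel"
    using cont_of_der(3) dw dw1 dz dz1 by blast+
  have w2eq: "w2 = (\<lambda>x. lam * w x - of_real (1 - ub x) * w1 x - of_real (q * ub x) * z x - c1 * z1 x)"
    using E1' by (intro ext) simp
  have cw2: "isCont w2 x" for x unfolding w2eq by (intro continuous_intros cw cw1 cz cz1 cub)
  have z2eq: "z2 = (\<lambda>x. (lam * z x + of_real (b x - q * a x) * z x - z1 x - of_real (a x) * w1 x) / of_real D)"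
  proof (intro ext)
    fix x show "z2 x = (lam * z x + of_real (b x - q * a x) * z x - z1 x - of_real (a x) * w1 x) / of_real D"
      using E2'[of x] D by (simp add: field_simps)
  qed
  have cz2: "isCont z2 x" for x unfolding z2eq using D by (intro continuous_intros cz cz1 cw1 ca cb) auto
  have mub: "ub \<in> borel_measurable lborel" by (rule cont_meas, rule continuous_at_imp_continuous_on) (use cub in auto)
  have ma: "a \<in> borel_measurable lborel" by (rule cont_meas, rule continuous_at_imp_continuous_on) (use ca in auto)
  have mb: "b \<in> borel_measurable lborel" by (rule cont_meas, rule continuous_at_imp_continuous_on) (use cb in auto)
  define N where "N = integral\<^sup>L lborel (\<lambda>x. (cmod (w x))\<^sup>2)"
  define N1 where "N1 = integral\<^sup>L lborel (\<lambda>x. (cmod (w1 x))\<^sup>2)"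
  define Z where "Z = integral\<^sup>L lborel (\<lambda>x. (cmod (z x))\<^sup>2)"
  define Z1 where "Z1 = integral\<^sup>L lborel (\<lambda>x. (cmod (z1 x))\<^sup>2)"
  have N0: "0 \<le> N" and N10: "0 \<le> N1" and Z0: "0 \<le> Z" and Z10: "0 \<le> Z1"
    unfolding N_def N1_def Z_def Z1_def by (auto intro!: integral_nonneg_AE)
  have intsq: "integral\<^sup>L lborel (\<lambda>x. f x * cnj (f x)) = complex_of_real (integral\<^sup>L lborel (\<lambda>x. (cmod (f x))\<^sup>2))"
    for f :: "real \<Rightarrow> complex"
    by (simp only: complex_norm_square[symmetric] integral_complex_of_real)
  note ib1 = ibp[OF dw1 dw cw2 cw1 iw1 iw2 iw iw1]
  note ib2 = ibp[OF dz dw cz1 cw1 iz iz1 iw iw1]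
  have mub1: "(\<lambda>x. 1 - ub x) \<in> borel_measurable lborel" using mub by measurable
  have mubq: "(\<lambda>x. q * ub x) \<in> borel_measurable lborel" using mub by measurable
  define A where "A x = complex_of_real (1 - ub x) * w1 x * cnj (w x)" for x
  define B where "B x = complex_of_real (q * ub x) * z x * cnj (w x)" for x
  define C where "C x = z x * cnj (w1 x)" for x
  have iA: "integrable lborel A" unfolding A_def
    by (rule L2prod[OF mw1 mw mub1 _ iw1 iw, of 1]) (use ub0 ub1' in auto)
  have iB: "integrable lborel B" unfolding B_def
    by (rule L2prod[OF mz mw mubq _ iz iw, of q]) (use ub0 ub1' q in \<open>auto simp: abs_mult intro: mult_left_le\<close>)
  have iC: "integrable lborel C" unfolding C_def by (rule L2prod1[OF mz mw1 iz iw1])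
  have iww: "integrable lborel (\<lambda>x. w x * cnj (w x))" by (rule L2prod1[OF mw mw iw iw])
  have ptW: "w2 x * cnj (w x) = lam * (w x * cnj (w x)) - A x - B x - c1 * (z1 x * cnj (w x))" for x
    unfolding A_def B_def E1' by (simp add: algebra_simps)
  have "integral\<^sup>L lborel (\<lambda>x. w2 x * cnj (w x))
      = integral\<^sup>L lborel (\<lambda>x. lam * (w x * cnj (w x)) - A x - B x - c1 * (z1 x * cnj (w x)))"
    unfolding ptW ..
  also have "\<dots> = lam * integral\<^sup>L lborel (\<lambda>x. w x * cnj (w x)) - integral\<^sup>L lborel A - integral\<^sup>L lborel B
                   - c1 * integral\<^sup>L lborel (\<lambda>x. z1 x * cnj (w x))"
    using iA iB iww ib2(1) by simp
  finally have W1: "- integral\<^sup>L lborel (\<lambda>x. w1 x * cnj (w1 x))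
      = lam * integral\<^sup>L lborel (\<lambda>x. w x * cnj (w x)) - integral\<^sup>L lborel A - integral\<^sup>L lborel B
        + c1 * integral\<^sup>L lborel C"
    unfolding ib1(3) ib2(3) C_def by simp
  define Y where "Y = integral\<^sup>L lborel (\<lambda>x. A x + B x - c1 * C x)"
  have Yeq: "Y = integral\<^sup>L lborel A + integral\<^sup>L lborel B - c1 * integral\<^sup>L lborel C"
    unfolding Y_def using iA iB iC by simp
  have W2: "lam * complex_of_real N + complex_of_real N1 = Y"
    using W1 unfolding Yeq intsq N_def N1_def by (simp add: algebra_simps)
  have ReY: "Re Y = Re lam * N + N1" and ImY: "Im Y = Im lam * N" using W2[symmetric] by auto
  have sW: "(Re lam + \<bar>Im lam\<bar>) * N + N1 \<le> sqrt 2 * cmod Y"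
  proof -
    have "(Re lam + \<bar>Im lam\<bar>) * N + N1 = Re Y + \<bar>Im Y\<bar>" unfolding ReY ImY using N0 by (simp add: abs_mult algebra_simps)
    also have "\<dots> \<le> sqrt 2 * cmod Y" by (rule reim)
    finally show ?thesis .
  qed
  define cc where "cc = 1/8 + \<bar>D - 1\<bar>\<^sup>2 / 4"
  have iAB: "integrable lborel (\<lambda>x. A x + B x - c1 * C x)" using iA iB iC by simp
  have ibW: "integrable lborel (\<lambda>x. 3/4 * (cmod (w1 x))\<^sup>2 + 3 * (cmod (w x))\<^sup>2 + cc * (cmod (z x))\<^sup>2)"
    using iw iw1 iz by simp
  have "sqrt 2 * cmod Y \<le> sqrt 2 * integral\<^sup>L lborel (\<lambda>x. cmod (A x + B x - c1 * C x))"
    unfolding Y_def by (intro mult_left_mono integral_norm_bound) auto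
  also have "\<dots> = integral\<^sup>L lborel (\<lambda>x. sqrt 2 * cmod (A x + B x - c1 * C x))" by simp
  also have "\<dots> \<le> integral\<^sup>L lborel (\<lambda>x. 3/4 * (cmod (w1 x))\<^sup>2 + 3 * (cmod (w x))\<^sup>2 + cc * (cmod (z x))\<^sup>2)"
  proof (rule integral_mono)
    show "integrable lborel (\<lambda>x. sqrt 2 * cmod (A x + B x - c1 * C x))" using iAB by simp
    show "integrable lborel (\<lambda>x. 3/4 * (cmod (w1 x))\<^sup>2 + 3 * (cmod (w x))\<^sup>2 + cc * (cmod (z x))\<^sup>2)" by (rule ibW)
    fix x
    have nA: "cmod (A x) \<le> cmod (w1 x) * cmod (w x)"
    proof -
      have "cmod (A x) = \<bar>1 - ub x\<bar> * (cmod (w1 x) * cmod (w x))" unfolding A_def by (simp add: norm_mult del: of_real_diff)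
      also have "\<dots> \<le> 1 * (cmod (w1 x) * cmod (w x))" using ub0[of x] ub1'[of x] by (intro mult_right_mono) auto
      finally show ?thesis by simp
    qed
    have nB: "cmod (B x) = q * ub x * cmod (z x) * cmod (w x)"
      unfolding B_def using q ub0[of x] by (simp add: norm_mult abs_mult)
    have nC: "cmod (c1 * C x) = q * \<bar>D - 1\<bar> * cmod (z x) * cmod (w1 x)"
      unfolding C_def c1_def using q by (simp add: norm_mult abs_mult del: of_real_diff)
    have "cmod (A x + B x - c1 * C x) \<le> cmod (A x) + cmod (B x) + cmod (c1 * C x)"
      using norm_triangle_ineq4[of "A x + B x" "c1 * C x"] norm_triangle_ineq[of "A x" "B x"] by linarith
    also have "\<dots> \<le> cmod (w1 x) * cmod (w x) + q * ub x * cmod (z x) * cmod (w x) + q * \<bar>D - 1\<bar> * cmod (z x) * cmod (w1 x)"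
      using nA nB nC by simp
    finally have t: "cmod (A x + B x - c1 * C x) \<le> cmod (w1 x) * cmod (w x) + q * ub x * cmod (z x) * cmod (w x) + q * \<bar>D - 1\<bar> * cmod (z x) * cmod (w1 x)" .
    have "sqrt 2 * cmod (A x + B x - c1 * C x) \<le> sqrt 2 * (cmod (w1 x) * cmod (w x) + q * ub x * cmod (z x) * cmod (w x) + q * \<bar>D - 1\<bar> * cmod (z x) * cmod (w1 x))"
      using t by (intro mult_left_mono) auto
    also have "\<dots> \<le> 3/4 * (cmod (w1 x))\<^sup>2 + 3 * (cmod (w x))\<^sup>2 + cc * (cmod (z x))\<^sup>2"
      unfolding cc_def by (rule pw1) (use ub0 ub1' q in auto)
    finally show "sqrt 2 * cmod (A x + B x - c1 * C x) \<le> 3/4 * (cmod (w1 x))\<^sup>2 + 3 * (cmod (w x))\<^sup>2 + cc * (cmod (z x))\<^sup>2" .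
  qed
  also have "\<dots> = 3/4 * N1 + 3 * N + cc * Z"
    unfolding N_def N1_def Z_def using iw iw1 iz by simp
  finally have WW: "(Re lam + \<bar>Im lam\<bar>) * N + N1 \<le> 3/4 * N1 + 3 * N + cc * Z" using sW by linarith
  note ib3 = ibp[OF dz1 dz cz2 cz1 iz1 iz2 iz iz1]
  note ib4 = ibp[OF dz dz cz1 cz1 iz iz1 iz iz1]
  have mab: "(\<lambda>x. b x - q * a x) \<in> borel_measurable lborel" using ma mb by measurable
  obtain Cab where Cab: "\<And>x. \<bar>b x - q * a x\<bar> \<le> Cab"
  proof -
    have "\<bar>b x - q * a x\<bar> \<le> k + q * k * (4 / EA * Zb)" for x
    proof -
      have "0 \<le> b x" "b x \<le> k" unfolding b_def using k ign_nonneg[of EA uig "ub x"] ign_le1[OF EA, of uig "ub x"] by auto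
      moreover have "a x \<le> k * (4 / EA * Zb)" unfolding a_def using mult_left_mono[OF pb[of x], of k] k by (simp add: mult.assoc)
      moreover have "q * a x \<le> q * (k * (4 / EA * Zb))" using calculation(3) q by (intro mult_left_mono) auto
      moreover have "0 \<le> q * a x" using a0[of x] q by simp
      ultimately show ?thesis by (simp add: abs_le_iff mult.assoc)
    qed
    then show ?thesis using that by blast
  qed
  define P where "P x = complex_of_real (b x - q * a x) * z x * cnj (z x)" for x
  define X' where "X' x = complex_of_real (a x) * w1 x * cnj (z x)" for x
  obtain Ca where Ca: "\<And>x. \<bar>a x\<bar> \<le> Ca" using aL a0 by (metis abs_of_nonneg)
  have iP: "integrable lborel P" unfolding P_def by (rule L2prod[OF mz mz mab Cab iz iz])
  have iX: "integrable lborel X'" unfolding X'_def by (rule L2prod[OF mw1 mz ma Ca iw1 iz])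
  have izz: "integrable lborel (\<lambda>x. z x * cnj (z x))" by (rule L2prod1[OF mz mz iz iz])
  define T where "T = integral\<^sup>L lborel (\<lambda>x. z1 x * cnj (z x))"
  define X where "X = integral\<^sup>L lborel X'"
  define C0 where "C0 = integral\<^sup>L lborel (\<lambda>x. (b x - q * a x) * (cmod (z x))\<^sup>2)"
  have PC0: "integral\<^sup>L lborel P = complex_of_real C0"
  proof -
    have "P = (\<lambda>x. complex_of_real ((b x - q * a x) * (cmod (z x))\<^sup>2))"
      unfolding P_def by (rule ext) (simp only: of_real_mult complex_norm_square mult.assoc)
    then show ?thesis unfolding C0_def by (simp only: integral_complex_of_real)
  qed
  have ptZ: "complex_of_real D * (z2 x * cnj (z x)) = lam * (z x * cnj (z x)) + P x - z1 x * cnj (z x) - X' x" for x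
  proof -
    have "complex_of_real D * (z2 x * cnj (z x)) = (complex_of_real D * z2 x) * cnj (z x)" by simp
    also have "\<dots> = lam * (z x * cnj (z x)) + P x - z1 x * cnj (z x) - X' x"
      unfolding E2' P_def X'_def by (simp add: algebra_simps)
    finally show ?thesis .
  qed
  have "complex_of_real D * integral\<^sup>L lborel (\<lambda>x. z2 x * cnj (z x))
      = integral\<^sup>L lborel (\<lambda>x. complex_of_real D * (z2 x * cnj (z x)))" by simp
  also have "\<dots> = integral\<^sup>L lborel (\<lambda>x. lam * (z x * cnj (z x)) + P x - z1 x * cnj (z x) - X' x)"
    unfolding ptZ ..
  also have "\<dots> = lam * integral\<^sup>L lborel (\<lambda>x. z x * cnj (z x)) + integral\<^sup>L lborel P - T - X"
    unfolding T_def X_def using izz iP ib4(1) iX by simp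
  finally have Z1eq: "- complex_of_real D * complex_of_real Z1 = lam * complex_of_real Z + complex_of_real C0 - T - X"
    unfolding ib3(3) intsq PC0 Z_def Z1_def by simp
  have ReT: "Re T = 0"
  proof -
    have "T = - integral\<^sup>L lborel (\<lambda>x. z x * cnj (z1 x))" unfolding T_def by (rule ib4(3))
    also have "integral\<^sup>L lborel (\<lambda>x. z x * cnj (z1 x)) = integral\<^sup>L lborel (\<lambda>x. cnj (z1 x * cnj (z x)))"
      by (simp add: mult.commute)
    also have "\<dots> = cnj T" unfolding T_def by (rule Bochner_Integration.integral_cnj)
    finally have "T = - cnj T" .
    then have "Re T = Re (- cnj T)" by (rule arg_cong)
    then show ?thesis by simp
  qed
  have r1: "Re (- complex_of_real D * complex_of_real Z1) = Re (lam * complex_of_real Z + complex_of_real C0 - T - X)"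
    using Z1eq by (rule arg_cong)
  have r2: "Im (- complex_of_real D * complex_of_real Z1) = Im (lam * complex_of_real Z + complex_of_real C0 - T - X)"
    using Z1eq by (rule arg_cong)
  have ReZ: "Re lam * Z + C0 + D * Z1 = Re X" using r1 ReT by simp
  have ImZ: "Im lam * Z = Im T + Im X" using r2 by simp
  have sZ: "(Re lam + \<bar>Im lam\<bar>) * Z + C0 + D * Z1 \<le> cmod T + sqrt 2 * cmod X"
  proof -
    have "\<bar>Im T + Im X\<bar> = \<bar>Im lam\<bar> * Z" unfolding ImZ[symmetric] using Z0 by (simp add: abs_mult)
    then have "(Re lam + \<bar>Im lam\<bar>) * Z + C0 + D * Z1 = Re X + \<bar>Im T + Im X\<bar>"
      using ReZ by (simp add: distrib_right)
    also have "\<dots> \<le> \<bar>Im T\<bar> + (Re X + \<bar>Im X\<bar>)" by simp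
    also have "\<dots> \<le> cmod T + sqrt 2 * cmod X" using abs_Im_le_cmod[of T] reim[of X] by linarith
    finally show ?thesis .
  qed
  have nT: "cmod T \<le> integral\<^sup>L lborel (\<lambda>x. cmod (z1 x) * cmod (z x))"
    unfolding T_def using integral_norm_bound[of lborel "\<lambda>x. z1 x * cnj (z x)"] by (simp add: norm_mult)
  have nX: "cmod X \<le> integral\<^sup>L lborel (\<lambda>x. a x * cmod (w1 x) * cmod (z x))"
    unfolding X_def X'_def using integral_norm_bound[of lborel "\<lambda>x. complex_of_real (a x) * w1 x * cnj (z x)"] a0
    by (simp add: norm_mult abs_of_nonneg)
  have i1: "integrable lborel (\<lambda>x. cmod (z1 x) * cmod (z x))"
    using integrable_norm[OF ib4(1)] by (simp add: norm_mult)
  have i2: "integrable lborel (\<lambda>x. a x * cmod (w1 x) * cmod (z x))"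
    using integrable_norm[OF iX] a0 unfolding X'_def by (simp add: norm_mult abs_of_nonneg)
  have i3: "integrable lborel (\<lambda>x. (b x - q * a x) * (cmod (z x))\<^sup>2)"
  proof (rule Bochner_Integration.integrable_bound)
    show "integrable lborel (\<lambda>x. Cab * (cmod (z x))\<^sup>2)" using iz by simp
    show "(\<lambda>x. (b x - q * a x) * (cmod (z x))\<^sup>2) \<in> borel_measurable lborel" using mab mz by measurable
    show "AE x in lborel. norm ((b x - q * a x) * (cmod (z x))\<^sup>2) \<le> norm (Cab * (cmod (z x))\<^sup>2)"
    proof (rule AE_I2)
      fix x
      have "\<bar>b x - q * a x\<bar> * (cmod (z x))\<^sup>2 \<le> Cab * (cmod (z x))\<^sup>2" using Cab[of x] by (intro mult_right_mono) auto
      moreover have "Cab = \<bar>Cab\<bar>" using Cab[of x] by simp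
      ultimately show "norm ((b x - q * a x) * (cmod (z x))\<^sup>2) \<le> norm (Cab * (cmod (z x))\<^sup>2)"
        by (simp add: abs_mult)
    qed
  qed
  define s where "s = Re lam + \<bar>Im lam\<bar>"
  define G where "G x = cmod (z1 x) * cmod (z x) + sqrt 2 * (a x * cmod (w1 x) * cmod (z x))
                        - (b x - q * a x) * (cmod (z x))\<^sup>2" for x
  define H where "H x = k * M * (cmod (z x))\<^sup>2 + D * (cmod (z1 x))\<^sup>2 + (cmod (z x))\<^sup>2 / (4 * D)
                        + k * L / 2 * (cmod (w1 x))\<^sup>2" for x
  have iG: "integrable lborel G" unfolding G_def using i1 i2 i3 by simp
  have iH: "integrable lborel H" unfolding H_def using iz iz1 iw1 by simp
  have intG: "integral\<^sup>L lborel G = integral\<^sup>L lborel (\<lambda>x. cmod (z1 x) * cmod (z x))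
       + sqrt 2 * integral\<^sup>L lborel (\<lambda>x. a x * cmod (w1 x) * cmod (z x)) - C0"
    unfolding G_def C0_def using i1 i2 i3 by simp
  have intH: "integral\<^sup>L lborel H = k * M * Z + D * Z1 + Z / (4 * D) + k * L / 2 * N1"
    unfolding H_def Z_def Z1_def N1_def using iz iz1 iw1 by simp
  have GH: "integral\<^sup>L lborel G \<le> integral\<^sup>L lborel H"
  proof (rule integral_mono[OF iG iH])
    fix x
    have "(q * a x - b x) * (cmod (z x))\<^sup>2 + cmod (z1 x) * cmod (z x) + sqrt 2 * (a x * cmod (w1 x) * cmod (z x))
        \<le> k * M * (cmod (z x))\<^sup>2 + D * (cmod (z1 x))\<^sup>2 + (cmod (z x))\<^sup>2 / (4 * D) + k * L / 2 * (cmod (w1 x))\<^sup>2"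
      by (rule pw2) (use a0 aL aM D in auto)
    moreover have "(q * a x - b x) * (cmod (z x))\<^sup>2 = - ((b x - q * a x) * (cmod (z x))\<^sup>2)" by (simp add: algebra_simps)
    ultimately show "G x \<le> H x" unfolding G_def H_def by linarith
  qed
  have ZZ: "s * Z + D * Z1 \<le> k * M * Z + D * Z1 + Z / (4 * D) + k * L / 2 * N1"
  proof -
    have "s * Z + C0 + D * Z1 \<le> integral\<^sup>L lborel (\<lambda>x. cmod (z1 x) * cmod (z x))
          + sqrt 2 * integral\<^sup>L lborel (\<lambda>x. a x * cmod (w1 x) * cmod (z x))"
    proof -
      have "sqrt 2 * cmod X \<le> sqrt 2 * integral\<^sup>L lborel (\<lambda>x. a x * cmod (w1 x) * cmod (z x))"
        by (rule mult_left_mono[OF nX]) simp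
      then show ?thesis using sZ nT unfolding s_def by linarith
    qed
    then have "s * Z + D * Z1 \<le> integral\<^sup>L lborel G" unfolding intG by linarith
    then show ?thesis using GH intH by linarith
  qed
  have WW': "s * N + N1 \<le> 3/4 * N1 + 3 * N + cc * Z" using WW unfolding s_def .
  define R where "R = 1 / (4 * D) + (1/4 + 1/2 * \<bar>D - 1\<bar>\<^sup>2) * k * L + k * M"
  show ?thesis unfolding s_def[symmetric] R_def[symmetric]
  proof (rule ccontr)
    assume "\<not> s \<le> max 3 R"
    then have s3: "s > 3" and sR: "s > R" by auto
    have sN: "(s - 3) * N \<ge> 0" using s3 N0 by simp
    have N1b: "N1 \<le> 4 * cc * Z" using WW' sN by (simp add: algebra_simps)
    have "k * L / 2 * N1 \<le> k * L / 2 * (4 * cc * Z)" using N1b kL0 by (intro mult_left_mono) auto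
    then have "s * Z \<le> R * Z" using ZZ unfolding R_def cc_def by (simp add: algebra_simps)
    then have Zle: "Z \<le> 0"
    proof -
      assume "s * Z \<le> R * Z"
      show "Z \<le> 0"
      proof (rule ccontr)
        assume "\<not> Z \<le> 0"
        then have "R * Z < s * Z" using sR by (intro mult_strict_right_mono) auto
        then show False using \<open>s * Z \<le> R * Z\<close> by simp
      qed
    qed
    have Zz: "Z = 0" using Zle Z0 by simp
    have "(s - 3) * N \<le> 0" using WW' Zz N10 by (simp add: algebra_simps)
    then have Nz: "N = 0" using s3 N0 by (smt (verit) mult_pos_pos)
    have w0: "w x = 0" for x
    proof -
      have "(cmod (w x))\<^sup>2 = 0"
        by (rule int_zero_cont[OF iw]) (use Nz N_def cw in \<open>auto intro!: continuous_intros\<close>)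
      then show ?thesis by simp
    qed
    have z0: "z x = 0" for x
    proof -
      have "(cmod (z x))\<^sup>2 = 0"
        by (rule int_zero_cont[OF iz]) (use Zz Z_def cz in \<open>auto intro!: continuous_intros\<close>)
      then show ?thesis by simp
    qed
    show False using nt w0 z0 by blast
  qed
qed


end
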